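(* For any positive integer $k$ and integers $n_1,\dots,n_k>1$, \[\mathrm{mur}\Big(\bigcup_{i=1}^k K_{n_i}\Big)=\mathrm{mur}(K_{n_1,\dots,n_k})=k-1,\] where $\bigcup_{i=1}^k K_{n_i}$ is the vertex-disjoint union of complete graphs on $n_1,\dots,n_k$ vertices and $K_{n_1,\dots,n_k}$ is the complete multipartite graph with parts of sizes $n_1,\dots,n_k$.
   Context: For a finite simple undirected graph $G$ on vertices $v_1,\dots,v_n$, let $A_G$ be its $(0,1)$-adjacency matrix, $D_G=\mathrm{diag}(d_1,\dots,d_n)$ with $d_i$ the degree of $v_i$, $I$ the $n\times n$ identity matrix and $J$ the $n\times n$ all-ones matrix. A universal adjacency matrix of $G$ is any matrix $\alpha A_G+\beta I+\gamma J+\delta D_G$ with real scalars $\alpha,\beta,\gamma,\delta$ and $\alpha\neq 0$. The minimum universal rank $\mathrm{mur}(G)$ is the minimum rank over all universal adjacency matrices of $G$. *)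

theory Defs
  imports Main "Jordan_Normal_Form.DL_Rank"
begin

text \<open>A finite simple graph on vertices 0, ..., N-1 is given by its vertex count N and an
  adjacency predicate adj (assumed symmetric and irreflexive on the vertex set).\<close>

definition adj_mat :: "nat \<Rightarrow> (nat \<Rightarrow> nat \<Rightarrow> bool) \<Rightarrow> real mat" where
  "adj_mat N adj = mat N N (\<lambda>(i,j). if adj i j then 1 else 0)"

definition degree :: "nat \<Rightarrow> (nat \<Rightarrow> nat \<Rightarrow> bool) \<Rightarrow> nat \<Rightarrow> nat" where
  "degree N adj i = card {j. j < N \<and> adj i j}"

definition deg_mat :: "nat \<Rightarrow> (nat \<Rightarrow> nat \<Rightarrow> bool) \<Rightarrow> real mat" where
  "deg_mat N adj = mat N N (\<lambda>(i,j). if i = j then real (degree N adj i) else 0)"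

definition all_ones_mat :: "nat \<Rightarrow> real mat" where
  "all_ones_mat N = mat N N (\<lambda>_. 1)"

definition univ_adj_mat ::
  "nat \<Rightarrow> (nat \<Rightarrow> nat \<Rightarrow> bool) \<Rightarrow> real \<Rightarrow> real \<Rightarrow> real \<Rightarrow> real \<Rightarrow> real mat" where
  "univ_adj_mat N adj \<alpha> \<beta> \<gamma> \<delta> =
     \<alpha> \<cdot>\<^sub>m adj_mat N adj + \<beta> \<cdot>\<^sub>m 1\<^sub>m N + \<gamma> \<cdot>\<^sub>m all_ones_mat N + \<delta> \<cdot>\<^sub>m deg_mat N adj"

definition mur :: "nat \<Rightarrow> (nat \<Rightarrow> nat \<Rightarrow> bool) \<Rightarrow> nat" where
  "mur N adj = Min {vec_space.rank N (univ_adj_mat N adj \<alpha> \<beta> \<gamma> \<delta>) | \<alpha> \<beta> \<gamma> \<delta>. \<alpha> \<noteq> 0}"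

text \<open>Given part sizes ns = [n_1,...,n_k], vertices 0..<sum ns are split into consecutive
  blocks; part_of ns v is the index of the block containing v.\<close>
definition part_of :: "nat list \<Rightarrow> nat \<Rightarrow> nat" where
  "part_of ns v = (LEAST i. v < sum_list (take (Suc i) ns))"

definition union_complete :: "nat list \<Rightarrow> nat \<Rightarrow> nat \<Rightarrow> bool" where
  "union_complete ns v w = (v \<noteq> w \<and> part_of ns v = part_of ns w)"

definition complete_multipartite :: "nat list \<Rightarrow> nat \<Rightarrow> nat \<Rightarrow> bool" where
  "complete_multipartite ns v w = (part_of ns v \<noteq> part_of ns w)"

end

theory Submission
  imports Defs
begin

lemma univ_carrier: "univ_adj_mat N adj a b c d \<in> carrier_mat N N"
  by (simp add: univ_adj_mat_def adj_mat_def deg_mat_def all_ones_mat_def)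

lemma univ_entry: "i < N \<Longrightarrow> j < N \<Longrightarrow> univ_adj_mat N adj a b c d $$ (i,j) =
   a * (if adj i j then 1 else 0) + b * (if i = j then 1 else 0) + c + d * (if i = j then real (degree N adj i) else 0)"
  by (simp add: univ_adj_mat_def adj_mat_def deg_mat_def all_ones_mat_def)

lemma take_sum_mono: "i \<le> j \<Longrightarrow> sum_list (take i (ns::nat list)) \<le> sum_list (take j ns)"
proof -
  assume "i \<le> j"
  then obtain d where "j = i + d" using le_Suc_ex by blast
  then show ?thesis by (simp add: take_add)
qed

lemma part_of_eq:
  assumes "p < length ns" "sum_list (take p ns) \<le> v" "v < sum_list (take (Suc p) ns)"
  shows "part_of ns v = p"
  unfolding part_of_def
proof (rule Least_equality)
  show "v < sum_list (take (Suc p) ns)" by fact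
  fix y assume y: "v < sum_list (take (Suc y) ns)"
  show "p \<le> y"
  proof (rule ccontr)
    assume "\<not> p \<le> y"
    then have "sum_list (take (Suc y) ns) \<le> sum_list (take p ns)" by (intro take_sum_mono) simp
    then show False using y assms by simp
  qed
qed

lemma part_of_lt:
  assumes "v < sum_list ns" "length ns \<ge> 1"
  shows "part_of ns v < length ns"
proof -
  have "v < sum_list (take (Suc (length ns - 1)) ns)" using assms by simp
  then have "part_of ns v \<le> length ns - 1" unfolding part_of_def by (rule Least_le)
  then show ?thesis using assms by simp
qed

lemma (in vec_space) rank_le_span_card:
  assumes A: "A \<in> carrier_mat n nc" and W: "W \<subseteq> carrier_vec n" "finite W"
    and sub: "set (cols A) \<subseteq> span W"
  shows "rank A \<le> card W"
proof -
  have "vectorspace class_ring (vs (span W))" using span_is_subspace[THEN subspace_is_vs, OF W(1)] by auto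
  have sm: "submodule class_ring (span W) V" using W(1) by (simp add: span_is_submodule)
  have "subspace class_ring(span (set (cols A))) (vs (span W))"
    using vectorspace.span_is_subspace[OF \<open>vectorspace class_ring (vs (span W))\<close>, of "set (cols A)", unfolded
    span_li_not_depend(1)[OF sub sm]] sub by auto
  have fin_dim:"vectorspace.fin_dim class_ring (vs (span W))"
       "vectorspace.fin_dim class_ring (vs (span W)\<lparr>carrier := span (set (cols A))\<rparr>)"
    using fin_dim_span fin_dim_span_cols A W by auto
  have "vectorspace.dim class_ring (vs (span W)) \<le> card W"
  proof (rule vectorspace.gen_ge_dim[OF \<open>vectorspace class_ring (vs (span W))\<close> W(2)])
    show "W \<subseteq> carrier (vs (span W))" using W(1) in_own_span by auto
    show "LinearCombinations.module.gen_set class_ring (vs (span W)) W"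
      using span_li_not_depend(1)[OF _ sm, of W] W(1) in_own_span by auto
  qed
  then show ?thesis unfolding rank_def using "vectorspace.subspace_dim"[OF
    \<open>vectorspace class_ring (vs (span W))\<close> \<open>subspace class_ring (span (set (cols A))) (vs (span W))\<close>
    fin_dim(1) fin_dim(2)] by simp
qed


lemma rank_block_le:
  fixes M :: "real mat" and f :: "nat \<Rightarrow> nat"
  assumes M: "M \<in> carrier_mat N N" and k: "k \<ge> 1" and fk: "\<forall>i<N. f i < k"
    and surj: "\<forall>q<k. \<exists>i<N. f i = q"
    and ent: "\<forall>i<N. \<forall>j<N. M $$ (i,j) = (if f i = f j then 1 else 0) - 1 / real k"
  shows "vec_space.rank N M \<le> k - 1"
proof -
  interpret V: vec_space "TYPE(real)" N .
  define w where "w q = vec N (\<lambda>i. (if f i = q then 1 else 0) - 1 / real k)" for q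
  define W where "W = w ` {..<k-1}"
  have inj: "inj_on w {..<k-1}"
  proof (rule inj_onI)
    fix q q' assume q: "q \<in> {..<k-1}" "q' \<in> {..<k-1}" and e: "w q = w q'"
    have "q < k" using q by auto
    then obtain i where i: "i < N" "f i = q" using surj by blast
    have "w q $ i = w q' $ i" using e by simp
    then show "q = q'" using i unfolding w_def by (auto split: if_splits)
  qed
  have card: "card W = k - 1" unfolding W_def using card_image[OF inj] by simp
  have Wc: "W \<subseteq> carrier_vec N" unfolding W_def w_def by auto
  have fW: "finite W" unfolding W_def by simp
  have colw: "col M j = w (f j)" if j: "j < N" for j
    by (rule eq_vecI) (use M j ent in \<open>auto simp: w_def\<close>)
  have "set (cols M) \<subseteq> V.span W"
  proof
    fix v assume "v \<in> set (cols M)"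
    then obtain j where j: "j < N" "v = col M j" using M by (auto simp: cols_def)
    show "v \<in> V.span W"
    proof (cases "f j < k - 1")
      case True
      then have "v \<in> W" using colw j unfolding W_def by auto
      then show ?thesis using V.in_own_span[OF Wc] by auto
    next
      case False
      then have fj: "f j = k - 1" using fk j by auto
      define a where "a = (\<lambda>_::real vec. -1::real)"
      have "V.lincomb a W = v"
      proof (rule eq_vecI)
        show "dim_vec (V.lincomb a W) = dim_vec v"
          using j M Wc V.lincomb_dim[OF fW Wc] by simp
        then have dv: "dim_vec (V.lincomb a W) = N" using j M by simp
        fix i assume "i < dim_vec v"
        then have i: "i < N" using j M by simp
        have "V.lincomb a W $ i = (\<Sum>u\<in>W. a u * u $ i)"
          using V.lincomb_index[OF i Wc] .
        also have "\<dots> = (\<Sum>q<k-1. - ((if f i = q then 1 else 0) - 1 / real k))"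
          unfolding W_def by (subst sum.reindex[OF inj]) (use i in \<open>auto simp: a_def w_def\<close>)
        also have "\<dots> = - (if f i < k - 1 then 1 else 0) + real (k-1) / real k"
          by (simp add: sum_negf sum_subtractf sum.delta')
        also have "\<dots> = v $ i"
        proof -
          have rk: "real (k-1) = real k - 1" using k by simp
          have kp: "real k > 0" using k by simp
          have "v $ i = (if f i = k - 1 then 1 else 0) - 1 / real k"
            using colw[OF j(1)] j i fj unfolding w_def by simp
          moreover have "f i < k" using fk i by simp
          ultimately show ?thesis unfolding rk using kp
            by (cases "f i < k - 1") (auto simp: field_simps)
        qed
        finally show "V.lincomb a W $ i = v $ i" .
      qed
      moreover have "V.lincomb a W \<in> V.span W"
        unfolding V.span_def using fW by (auto simp: a_def)
      ultimately show ?thesis by simp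
    qed
  qed
  then show ?thesis using vec_space.rank_le_span_card[OF M Wc fW] card by simp
qed

lemma (in vec_space) rank_ge_pattern:
  fixes M :: "'a mat" and ra cb :: "nat \<Rightarrow> nat" and c g :: 'a
  assumes M: "M \<in> carrier_mat n n" and k: "k \<ge> 1" and c: "c \<noteq> 0"
    and rab: "\<And>p. p < k \<Longrightarrow> ra p < n \<and> cb p < n"
    and ent: "\<And>p q. p < k \<Longrightarrow> q < k \<Longrightarrow> M $$ (ra p, cb q) = (if p = q then c else 0) + g"
  shows "rank M \<ge> k - 1"
proof -
  define U where "U = (\<lambda>q. col M (cb q)) ` {..<k-1}"
  have inj: "inj_on (\<lambda>q. col M (cb q)) {..<k-1}"
  proof (rule inj_onI)
    fix q q' assume q: "q \<in> {..<k-1}" "q' \<in> {..<k-1}" and e: "col M (cb q) = col M (cb q')"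
    show "q = q'"
    proof (rule ccontr)
      assume ne: "q \<noteq> q'"
      have "col M (cb q) $ ra q = col M (cb q') $ ra q" using e by simp
      then have "M $$ (ra q, cb q) = M $$ (ra q, cb q')" using M rab q by auto
      moreover have "q < k" "q' < k" using q by auto
      ultimately show False using ent[of q q] ent[of q q'] ne c by auto
    qed
  qed
  have card: "card U = k - 1" unfolding U_def using card_image[OF inj] by simp
  have Ucols: "U \<subseteq> set (cols M)" unfolding U_def using M rab
    by (auto simp: cols_def)
  have Ucar: "U \<subseteq> carrier_vec n" using Ucols M cols_dim by blast
  have li: "lin_indpt U"
  proof
    assume "lin_dep U"
    then obtain a w where a: "a \<in> U \<rightarrow> carrier class_ring" "lincomb a U = 0\<^sub>v n" "w \<in> U" "a w \<noteq> 0"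
      using finite_lin_dep[of U] Ucar unfolding U_def by auto
    define d where "d q = a (col M (cb q))" for q
    have row: "(\<Sum>q<k-1. d q * M $$ (ra p, cb q)) = 0" if p: "p < k" for p
    proof -
      have "0 = lincomb a U $ ra p" using a rab p by auto
      also have "\<dots> = (\<Sum>u\<in>U. a u * u $ ra p)" using lincomb_index[OF _ Ucar] rab p by auto
      also have "\<dots> = (\<Sum>q<k-1. d q * col M (cb q) $ ra p)"
        unfolding U_def d_def by (subst sum.reindex[OF inj]) auto
      also have "\<dots> = (\<Sum>q<k-1. d q * M $$ (ra p, cb q))"
        by (rule sum.cong) (use M rab p in auto)
      finally show ?thesis by simp
    qed
    have row2: "(\<Sum>q<k-1. d q * M $$ (ra p, cb q)) = (if p < k - 1 then d p * c else 0) + g * (\<Sum>q<k-1. d q)"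
      if p: "p < k" for p
    proof -
      have "(\<Sum>q<k-1. d q * M $$ (ra p, cb q)) = (\<Sum>q<k-1. (if p = q then d q * c else 0) + g * d q)"
        by (rule sum.cong) (use p ent in \<open>auto simp: algebra_simps\<close>)
      also have "\<dots> = (\<Sum>q<k-1. (if p = q then d q * c else 0)) + g * (\<Sum>q<k-1. d q)"
        by (simp add: sum.distrib sum_distrib_left)
      also have "(\<Sum>q<k-1. (if p = q then d q * c else 0)) = (if p < k - 1 then d p * c else 0)"
        by (simp add: sum.delta)
      finally show ?thesis .
    qed
    have gs: "g * (\<Sum>q<k-1. d q) = 0" using row[of "k-1"] row2[of "k-1"] k by simp
    have "d q = 0" if q: "q < k - 1" for q
    proof -
      have "q < k" using q by simp
      then have "d q * c + g * (\<Sum>q<k-1. d q) = 0" using row[of q] row2[of q] q by simp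
      then have "d q * c = 0" by (simp only: gs add_0_right)
      then show ?thesis using c by simp
    qed
    moreover obtain q where "q < k - 1" "w = col M (cb q)" using a(3) unfolding U_def by auto
    ultimately show False using a(4) d_def by auto
  qed
  show ?thesis using rank_ge_card_indpt[OF M Ucols li] card by simp
qed


lemma mur_eq:
  assumes ub: "\<exists>a b c d. a \<noteq> 0 \<and> vec_space.rank N (univ_adj_mat N adj a b c d) \<le> m"
    and lb: "\<And>a b c d. a \<noteq> 0 \<Longrightarrow> vec_space.rank N (univ_adj_mat N adj a b c d) \<ge> m"
  shows "mur N adj = m"
proof -
  let ?S = "{vec_space.rank N (univ_adj_mat N adj \<alpha> \<beta> \<gamma> \<delta>) | \<alpha> \<beta> \<gamma> \<delta>. \<alpha> \<noteq> 0}"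
  have "?S \<subseteq> {..N}" using vec_space.rank_le_nc[OF univ_carrier] by auto
  then have fin: "finite ?S" by (rule finite_subset) simp
  obtain a b c d where abcd: "a \<noteq> 0" "vec_space.rank N (univ_adj_mat N adj a b c d) \<le> m" using ub by blast
  have mem: "m \<in> ?S"
  proof -
    have "vec_space.rank N (univ_adj_mat N adj a b c d) = m" using abcd(2) lb[OF abcd(1), of b c d] by simp
    then show ?thesis using abcd(1) by blast
  qed
  show ?thesis unfolding mur_def
    by (rule Min_eqI[OF fin _ mem]) (use lb in auto)
qed

theorem theorem25:
  fixes ns :: "nat list"
  assumes "length ns \<ge> 1"
    and "\<forall>n \<in> set ns. n > 1"
  shows "mur (sum_list ns) (union_complete ns) = length ns - 1
       \<and> mur (sum_list ns) (complete_multipartite ns) = length ns - 1"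
proof -
  define k where "k = length ns"
  define N where "N = sum_list ns"
  define s where "s p = sum_list (take p ns)" for p
  have k: "k \<ge> 1" using assms k_def by simp
  have sS: "s (Suc p) = s p + ns ! p" if "p < k" for p
    using that unfolding s_def k_def by (simp add: take_Suc_conv_app_nth)
  have big: "ns ! p > 1" if "p < k" for p using that assms(2) k_def by auto
  have sN: "s (Suc p) \<le> N" if "p < k" for p
    using take_sum_mono[of "Suc p" "length ns" ns] that unfolding s_def N_def k_def by simp
  have po1: "part_of ns (s p) = p" and po2: "part_of ns (s p + 1) = p"
    and lt1: "s p < N" and lt2: "s p + 1 < N" if p: "p < k" for p
  proof -
    have "s p + 1 < s (Suc p)" using sS[OF p] big[OF p] by simp
    then show "part_of ns (s p) = p" "part_of ns (s p + 1) = p"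
      using part_of_eq[of p ns] p k_def s_def by auto
    show "s p < N" "s p + 1 < N" using sN[OF p] \<open>s p + 1 < s (Suc p)\<close> by auto
  qed
  have plt: "part_of ns i < k" if "i < N" for i using part_of_lt[of i ns] that assms N_def k_def by simp
  have surj: "\<forall>q<k. \<exists>i<N. part_of ns i = q" using po1 lt1 by blast
  have ne: "s p \<noteq> s q + 1" if "p < k" "q < k" for p q
    using po1[of p] po2[of q] that by (cases "p = q") auto
  have part1: "mur N (union_complete ns) = k - 1"
  proof (rule mur_eq)
    show "\<exists>a b c d. a \<noteq> 0 \<and> vec_space.rank N (univ_adj_mat N (union_complete ns) a b c d) \<le> k - 1"
    proof (intro exI conjI)
      show "vec_space.rank N (univ_adj_mat N (union_complete ns) 1 1 (- 1 / real k) 0) \<le> k - 1"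
        by (rule rank_block_le[OF univ_carrier k, where f = "part_of ns"])
          (use plt surj in \<open>auto simp: univ_entry union_complete_def\<close>)
    qed simp
    fix a b c d :: real assume a: "a \<noteq> 0"
    show "vec_space.rank N (univ_adj_mat N (union_complete ns) a b c d) \<ge> k - 1"
      by (rule vec_space.rank_ge_pattern[OF univ_carrier k a, where ra = s and cb = "\<lambda>q. s q + 1" and g = c])
        (use lt1 lt2 ne po1 po2 in \<open>auto simp: univ_entry union_complete_def\<close>)
  qed
  have part2: "mur N (complete_multipartite ns) = k - 1"
  proof (rule mur_eq)
    show "\<exists>a b c d. a \<noteq> 0 \<and> vec_space.rank N (univ_adj_mat N (complete_multipartite ns) a b c d) \<le> k - 1"
    proof (intro exI conjI)
      show "vec_space.rank N (univ_adj_mat N (complete_multipartite ns) (-1) 0 (1 - 1 / real k) 0) \<le> k - 1"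
        by (rule rank_block_le[OF univ_carrier k, where f = "part_of ns"])
          (use plt surj in \<open>auto simp: univ_entry complete_multipartite_def\<close>)
    qed simp
    fix a b c d :: real assume a: "a \<noteq> 0"
    have a': "- a \<noteq> 0" using a by simp
    show "vec_space.rank N (univ_adj_mat N (complete_multipartite ns) a b c d) \<ge> k - 1"
      by (rule vec_space.rank_ge_pattern[OF univ_carrier k a', where ra = s and cb = "\<lambda>q. s q + 1" and g = "a + c"])
        (use lt1 lt2 ne po1 po2 in \<open>auto simp: univ_entry complete_multipartite_def\<close>)
  qed
  show ?thesis using part1 part2 k_def N_def by simp
qed

end
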